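(* For every $n>0$: (1) $L_{\mathrm{RCC5}}(\mathcal{RS}^5)=L^{\mathrm S}_{\mathrm{RCC5}}(\mathcal{TOP})=L^{\mathrm S}_{\mathrm{RCC5}}(\mathbb R^n,\mathbb R^n_{\mathrm{reg}})$; (2) $L^{\mathrm{fin}}_{\mathrm{RCC5}}(\mathcal{RS}^5)=L^{\mathrm{fin}}_{\mathrm{RCC5}}(\mathcal{TOP})=L^{\mathrm{fin}}_{\mathrm{RCC5}}(\mathbb R^n,\mathbb R^n_{\mathrm{reg}})$.
   Context: Topology: interior $\mathbb I$, closure $\mathbb C$; regular closed: $\mathbb C\mathbb I(s)=s$; $\mathfrak T_{\mathrm{reg}}$ non-empty regular closed subsets; $\mathbb R^n$ Euclidean. Concrete RCC5-structure $\mathfrak R^5(\mathfrak T,U)$: domain $U$ (set of non-empty regular closed sets), relations $\mathrm{eq}$ ($s=t$), $\mathrm{po}$ ($\mathbb Is\cap\mathbb It\ne\emptyset$, $s\not\subseteq t$, $t\not\subseteq s$), $\mathrm{dr}$ ($\mathbb Is\cap\mathbb It=\emptyset$), $\mathrm{pp}$ ($s\subseteq t$, $s\ne t$), $\mathrm{ppi}$ (inverse of $\mathrm{pp}$). $\mathcal{TOP}$ here is the class of all $\mathfrak R^5(\mathfrak T,\mathfrak T_{\mathrm{reg}})$. $\mathcal{RS}^5$ is the class of general RCC5-structures: non-empty $W$ with five mutually disjoint jointly exhaustive relations $\mathrm{dr},\mathrm{eq},\mathrm{pp},\mathrm{ppi},\mathrm{po}$, $\mathrm{eq}$ identity, $\mathrm{po},\mathrm{dr}$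 symmetric, $\mathrm{pp}$ inverse of $\mathrm{ppi}$, satisfying the standard RCC5 composition table. $\mathcal L_{\mathrm{RCC5}}$: modal language with propositional variables, $\neg,\wedge$ and a box $[r]$ per RCC5 relation. $L_{\mathrm{RCC5}}(\mathcal S)$: formulas valid in all models on members of $\mathcal S$; $L^{\mathrm S}_{\mathrm{RCC5}}(\mathcal S)$: valid in all substructures of members; $L^{\mathrm{fin}}_{\mathrm{RCC5}}(\mathcal S)$: valid in all finite substructures of members. *)

theory Defs
  imports "HOL-Analysis.Analysis"
begin

datatype rel5 = DR | EQ | PP | PPI | PO

datatype fm = Var nat | Neg fm | Conj fm fm | Box rel5 fm

fun sat :: "'w set \<Rightarrow> (rel5 \<Rightarrow> 'w \<Rightarrow> 'w \<Rightarrow> bool) \<Rightarrow> (nat \<Rightarrow> 'w set) \<Rightarrow> 'w \<Rightarrow> fm \<Rightarrow> bool"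
where
  "sat W R V x (Var p) = (x \<in> V p)"
| "sat W R V x (Neg \<phi>) = (\<not> sat W R V x \<phi>)"
| "sat W R V x (Conj \<phi> \<psi>) = (sat W R V x \<phi> \<and> sat W R V x \<psi>)"
| "sat W R V x (Box r \<phi>) = (\<forall>y\<in>W. R r x y \<longrightarrow> sat W R V y \<phi>)"

definition valid_in :: "'w set \<Rightarrow> (rel5 \<Rightarrow> 'w \<Rightarrow> 'w \<Rightarrow> bool) \<Rightarrow> fm \<Rightarrow> bool" where
  "valid_in W R \<phi> \<longleftrightarrow> (\<forall>V. \<forall>x\<in>W. sat W R V x \<phi>)"

text \<open>Standard RCC5 composition table: comp r s lists the possible relations
between x and z when r x y and s y z.\<close>

fun comp5 :: "rel5 \<Rightarrow> rel5 \<Rightarrow> rel5 set" where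
  "comp5 EQ s = {s}"
| "comp5 r EQ = {r}"
| "comp5 DR DR = UNIV"
| "comp5 DR PO = {DR, PO, PP}"
| "comp5 DR PP = {DR, PO, PP}"
| "comp5 DR PPI = {DR}"
| "comp5 PO DR = {DR, PO, PPI}"
| "comp5 PO PO = UNIV"
| "comp5 PO PP = {PO, PP}"
| "comp5 PO PPI = {DR, PO, PPI}"
| "comp5 PP DR = {DR}"
| "comp5 PP PO = {DR, PO, PP}"
| "comp5 PP PP = {PP}"
| "comp5 PP PPI = UNIV"
| "comp5 PPI DR = {DR, PO, PPI}"
| "comp5 PPI PO = {PO, PPI}"
| "comp5 PPI PP = {PO, EQ, PP, PPI}"
| "comp5 PPI PPI = {PPI}"

definition rcc5_structure :: "'w set \<Rightarrow> (rel5 \<Rightarrow> 'w \<Rightarrow> 'w \<Rightarrow> bool) \<Rightarrow> bool" where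
  "rcc5_structure W R \<longleftrightarrow>
     W \<noteq> {} \<and>
     (\<forall>x\<in>W. \<forall>y\<in>W. \<exists>!r. R r x y) \<and>
     (\<forall>x\<in>W. \<forall>y\<in>W. R EQ x y \<longleftrightarrow> x = y) \<and>
     (\<forall>x\<in>W. \<forall>y\<in>W. R PO x y \<longleftrightarrow> R PO y x) \<and>
     (\<forall>x\<in>W. \<forall>y\<in>W. R DR x y \<longleftrightarrow> R DR y x) \<and>
     (\<forall>x\<in>W. \<forall>y\<in>W. R PP x y \<longleftrightarrow> R PPI y x) \<and>
     (\<forall>x\<in>W. \<forall>y\<in>W. \<forall>z\<in>W. \<forall>r s. R r x y \<and> R s y z \<longrightarrow> (\<exists>t\<in>comp5 r s. R t x z))"

definition regular_closed_regions :: "'a topology \<Rightarrow> 'a set set" where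
  "regular_closed_regions X =
     {s. s \<noteq> {} \<and> X closure_of (X interior_of s) = s}"

fun top_rel :: "'a topology \<Rightarrow> rel5 \<Rightarrow> 'a set \<Rightarrow> 'a set \<Rightarrow> bool" where
  "top_rel X EQ s t = (s = t)"
| "top_rel X PO s t = (X interior_of s \<inter> X interior_of t \<noteq> {} \<and> \<not> s \<subseteq> t \<and> \<not> t \<subseteq> s)"
| "top_rel X DR s t = (X interior_of s \<inter> X interior_of t = {})"
| "top_rel X PP s t = (s \<subseteq> t \<and> s \<noteq> t)"
| "top_rel X PPI s t = (t \<subseteq> s \<and> t \<noteq> s)"

definition L_RS5 :: "'w itself \<Rightarrow> fm set" where
  "L_RS5 _ = {\<phi>. \<forall>(W::'w set) R. rcc5_structure W R \<longrightarrow> valid_in W R \<phi>}"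

definition Lfin_RS5 :: "'w itself \<Rightarrow> fm set" where
  "Lfin_RS5 _ = {\<phi>. \<forall>(W::'w set) R U. rcc5_structure W R \<and> U \<subseteq> W \<and> U \<noteq> {} \<and> finite U
                      \<longrightarrow> valid_in U R \<phi>}"

definition LS_space :: "'a topology \<Rightarrow> fm set" where
  "LS_space X = {\<phi>. \<forall>U. U \<subseteq> regular_closed_regions X \<and> U \<noteq> {} \<longrightarrow> valid_in U (top_rel X) \<phi>}"

definition Lfin_space :: "'a topology \<Rightarrow> fm set" where
  "Lfin_space X = {\<phi>. \<forall>U. U \<subseteq> regular_closed_regions X \<and> U \<noteq> {} \<and> finite U
                          \<longrightarrow> valid_in U (top_rel X) \<phi>}"

text \<open>The same for the class TOP, restricted to spaces whose points have type 'a.\<close>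
definition LS_TOP :: "'a itself \<Rightarrow> fm set" where
  "LS_TOP _ = (\<Inter>X::'a topology \<in> UNIV. LS_space X)"

definition Lfin_TOP :: "'a itself \<Rightarrow> fm set" where
  "Lfin_TOP _ = (\<Inter>X::'a topology \<in> UNIV. Lfin_space X)"

end

theory Submission imports Defs "HOL-Library.Countable" begin

instance rel5 :: countable by countable_datatype
instance fm :: countable by countable_datatype

lemma rcc_uniq: "rcc5_structure W R \<Longrightarrow> x \<in> W \<Longrightarrow> y \<in> W \<Longrightarrow> R r x y \<Longrightarrow> R s x y \<Longrightarrow> r = s"
  unfolding rcc5_structure_def by metis

lemma rcc_ex: "rcc5_structure W R \<Longrightarrow> x \<in> W \<Longrightarrow> y \<in> W \<Longrightarrow> \<exists>r. R r x y"
  unfolding rcc5_structure_def by metis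

lemma rcc_comp: "rcc5_structure W R \<Longrightarrow> x \<in> W \<Longrightarrow> y \<in> W \<Longrightarrow> z \<in> W \<Longrightarrow>
   R r x y \<Longrightarrow> R s y z \<Longrightarrow> R t x z \<Longrightarrow> t \<in> comp5 r s"
proof -
  assume a: "rcc5_structure W R" "x \<in> W" "y \<in> W" "z \<in> W" "R r x y" "R s y z" "R t x z"
  have ax: "\<forall>x\<in>W. \<forall>y\<in>W. \<forall>z\<in>W. \<forall>r s. R r x y \<and> R s y z \<longrightarrow> (\<exists>t\<in>comp5 r s. R t x z)"
    using a(1) unfolding rcc5_structure_def by (elim conjE)
  obtain t' where "t' \<in> comp5 r s" "R t' x z" using ax a(2-6) by blast
  with rcc_uniq[OF a(1,2,4) a(7)] show ?thesis by metis
qed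

lemma rcc_eq: "rcc5_structure W R \<Longrightarrow> x \<in> W \<Longrightarrow> y \<in> W \<Longrightarrow> R EQ x y = (x = y)"
  unfolding rcc5_structure_def by metis
lemma rcc_po: "rcc5_structure W R \<Longrightarrow> x \<in> W \<Longrightarrow> y \<in> W \<Longrightarrow> R PO x y = R PO y x"
  unfolding rcc5_structure_def by metis
lemma rcc_dr: "rcc5_structure W R \<Longrightarrow> x \<in> W \<Longrightarrow> y \<in> W \<Longrightarrow> R DR x y = R DR y x"
  unfolding rcc5_structure_def by metis
lemma rcc_pp: "rcc5_structure W R \<Longrightarrow> x \<in> W \<Longrightarrow> y \<in> W \<Longrightarrow> R PP x y = R PPI y x"
  unfolding rcc5_structure_def by metis

lemma rcc_sub: "rcc5_structure W R \<Longrightarrow> U \<subseteq> W \<Longrightarrow> U \<noteq> {} \<Longrightarrow> rcc5_structure U R"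
  unfolding rcc5_structure_def by (meson subsetD)

definition Fa :: "'w set \<Rightarrow> (rel5 \<Rightarrow> 'w \<Rightarrow> 'w \<Rightarrow> bool) \<Rightarrow> 'w \<Rightarrow> ('w + 'w \<times> 'w) set" where
  "Fa W R x = {Inl u | u. u \<in> W \<and> (u = x \<or> R PP u x)} \<union>
     {Inr (u,v) | u v. u \<in> W \<and> v \<in> W \<and> R PO u v \<and> (u = x \<or> R PP u x \<or> v = x \<or> R PP v x)}"

lemma Fa_sub: "Fa W R x \<subseteq> Inl ` W \<union> Inr ` (W \<times> W)"
  unfolding Fa_def by auto

lemma Fa_ne: "x \<in> W \<Longrightarrow> Inl x \<in> Fa W R x"
  unfolding Fa_def by auto

lemma Fa_le_iff:
  assumes S: "rcc5_structure W R" and x: "x \<in> W" and y: "y \<in> W"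
  shows "Fa W R x \<subseteq> Fa W R y \<longleftrightarrow> (x = y \<or> R PP x y)"
proof
  assume "Fa W R x \<subseteq> Fa W R y"
  with Fa_ne[OF x] show "x = y \<or> R PP x y" unfolding Fa_def by auto
next
  assume h: "x = y \<or> R PP x y"
  have tr: "R PP u y" if "u \<in> W" "R PP u x" for u
  proof -
    from h show ?thesis
    proof
      assume "x = y" thus ?thesis using that by simp
    next
      assume "R PP x y"
      obtain t where t: "R t u y" using rcc_ex[OF S \<open>u\<in>W\<close> y] by blast
      have "t \<in> comp5 PP PP" by (rule rcc_comp[OF S \<open>u\<in>W\<close> x y \<open>R PP u x\<close> \<open>R PP x y\<close> t])
      with t show ?thesis by simp
    qed
  qed
  show "Fa W R x \<subseteq> Fa W R y"
    unfolding Fa_def using h tr by fastforce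
qed

lemma not_dr_self: "rcc5_structure W R \<Longrightarrow> x \<in> W \<Longrightarrow> \<not> R DR x x"
  by (metis rcc_eq rcc_uniq rel5.distinct(1))

lemma le_not_dr:
  assumes S: "rcc5_structure W R" and W: "u \<in> W" "x \<in> W" "y \<in> W"
    and h1: "u = x \<or> R PP u x" and h2: "u = y \<or> R PP u y"
  shows "\<not> R DR x y"
proof
  assume d: "R DR x y"
  show False
  proof (cases "u = x")
    case True
    show False
    proof (cases "u = y")
      case True then show ?thesis using \<open>u = x\<close> d not_dr_self[OF S W(2)] by simp
    next
      case False then have "R PP x y" using h2 \<open>u = x\<close> by simp
      then show ?thesis using rcc_uniq[OF S W(2,3) d] by blast
    qed
  next
    case False
    hence px: "R PPI x u" using h1 rcc_pp[OF S W(1,2)] by simp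
    show False
    proof (cases "u = y")
      case True
      then show ?thesis using px d rcc_dr rcc_uniq S W
        by (metis h1 rcc_pp rel5.distinct(5) False)
    next
      case False
      hence "R PP u y" using h2 by simp
      from rcc_comp[OF S W(2,1,3) px this d] show False by simp
    qed
  qed
qed

lemma Fa_disj_iff:
  assumes S: "rcc5_structure W R" and x: "x \<in> W" and y: "y \<in> W"
  shows "Fa W R x \<inter> Fa W R y = {} \<longleftrightarrow> R DR x y"
proof
  assume e: "Fa W R x \<inter> Fa W R y = {}"
  obtain r where r: "R r x y" using rcc_ex[OF S x y] by blast
  show "R DR x y"
  proof (cases r)
    case DR then show ?thesis using r by simp
  next
    case EQ then have "x = y" using r rcc_eq[OF S x y] by simp
    then show ?thesis using e Fa_ne[OF x] by auto
  next
    case PP then have "Inl x \<in> Fa W R y" using r x unfolding Fa_def by auto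
    then show ?thesis using e Fa_ne[OF x] by auto
  next
    case PPI then have "Inl y \<in> Fa W R x" using r y rcc_pp[OF S y x] unfolding Fa_def by auto
    then show ?thesis using e Fa_ne[OF y] by auto
  next
    case PO then have "Inr (x,y) \<in> Fa W R x \<inter> Fa W R y" using r x y unfolding Fa_def by auto
    then show ?thesis using e by auto
  qed
next
  assume d: "R DR x y"
  have chain: False if "u \<in> W" "v \<in> W" "R PO u v" "u = x \<or> R PP u x" "v = y \<or> R PP v y" for u v
  proof -
    have xu: "R EQ x u \<or> R PPI x u" using that rcc_eq[OF S x] rcc_pp[OF S _ x] by auto
    obtain a where a: "R a x v" using rcc_ex[OF S x \<open>v\<in>W\<close>] by blast
    have av: "a \<in> {PO, PPI}"
      using xu
    proof
      assume "R EQ x u" then have "x = u" using rcc_eq[OF S x \<open>u\<in>W\<close>] by simp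
      then show ?thesis using a that(3) rcc_uniq[OF S x \<open>v\<in>W\<close>] by blast
    next
      assume "R PPI x u"
      from rcc_comp[OF S x \<open>u\<in>W\<close> \<open>v\<in>W\<close> this that(3) a] show ?thesis by simp
    qed
    show False
    proof (cases "v = y")
      case True then show ?thesis using a av d rcc_uniq[OF S x y] by auto
    next
      case False then have "R PP v y" using that by simp
      from rcc_comp[OF S x \<open>v\<in>W\<close> y a this d] av show ?thesis by auto
    qed
  qed
  show "Fa W R x \<inter> Fa W R y = {}"
  proof (rule ccontr)
    assume "Fa W R x \<inter> Fa W R y \<noteq> {}"
    then obtain p where p: "p \<in> Fa W R x" "p \<in> Fa W R y" by blast
    show False
    proof (cases p)
      case (Inl u)
      then show ?thesis using p le_not_dr[OF S _ x y] d unfolding Fa_def by auto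
    next
      case (Inr uv)
      then obtain u v where uv: "p = Inr (u,v)" by (cases uv) auto
      then have uvW: "u \<in> W" "v \<in> W" "R PO u v" using p unfolding Fa_def by auto
      have vu: "R PO v u" using uvW rcc_po[OF S] by blast
      have hx: "u = x \<or> R PP u x \<or> v = x \<or> R PP v x" and hy: "u = y \<or> R PP u y \<or> v = y \<or> R PP v y"
        using p uv unfolding Fa_def by auto
      show False
        using hx hy chain[OF uvW] chain[OF uvW(2,1) vu] le_not_dr[OF S uvW(1) x y] le_not_dr[OF S uvW(2) x y] d
        by blast
    qed
  qed
qed


definition Tset :: "nat set \<Rightarrow> real set" where
  "Tset K = {t. \<exists>k\<in>K. 2 * real k \<le> t \<and> t \<le> 2 * real k + 1}"

definition OTset :: "nat set \<Rightarrow> real set" where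
  "OTset K = {t. \<exists>k\<in>K. 2 * real k < t \<and> t < 2 * real k + 1}"

lemma nat_close_eq:
  fixes k k' :: nat
  assumes "\<bar>2 * real k - 2 * real k'\<bar> < 2" shows "k = k'"
proof (rule ccontr)
  assume "k \<noteq> k'"
  then consider "k < k'" | "k' < k" by linarith
  then show False
  proof cases
    case 1 then have "Suc k \<le> k'" by simp
    then have "real (Suc k) \<le> real k'" by (simp only: of_nat_le_iff)
    then have "real k + 1 \<le> real k'" by simp
    then show False using assms by linarith
  next
    case 2 then have "Suc k' \<le> k" by simp
    then have "real (Suc k') \<le> real k" by (simp only: of_nat_le_iff)
    then have "real k' + 1 \<le> real k" by simp
    then show False using assms by linarith
  qed
qed

lemma closed_Tset: "closed (Tset K)"
proof -
  have "closure (Tset K) \<subseteq> Tset K"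
  proof
    fix t assume "t \<in> closure (Tset K)"
    then have ap: "\<forall>e>0. \<exists>y\<in>Tset K. dist y t < e" by (simp add: closure_approachable)
    then obtain y1 where y1: "y1 \<in> Tset K" "dist y1 t < 1/2" by (meson half_gt_zero zero_less_one)
    then obtain k where k: "k \<in> K" "2 * real k \<le> y1" "y1 \<le> 2 * real k + 1" unfolding Tset_def by auto
    have "\<bar>t - (2 * real k + 1/2)\<bar> \<le> 1/2 + e" if e: "e > 0" for e
    proof -
      obtain y2 where y2: "y2 \<in> Tset K" "dist y2 t < min e (1/2)" using ap e
        by (meson half_gt_zero min_less_iff_conj zero_less_one)
      then obtain k' where k': "k' \<in> K" "2 * real k' \<le> y2" "y2 \<le> 2 * real k' + 1" unfolding Tset_def by auto
      have a1: "\<bar>y1 - t\<bar> < 1/2" using y1 unfolding dist_real_def by simp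
      have a2: "\<bar>y2 - t\<bar> < 1/2" using y2 unfolding dist_real_def by simp
      have "\<bar>2 * real k - 2 * real k'\<bar> < 2" using a1 a2 k(2,3) k'(2,3) unfolding abs_less_iff by linarith
      then have "k = k'" by (rule nat_close_eq)
      then have b: "2 * real k \<le> y2" "y2 \<le> 2 * real k + 1" using k' by auto
      have a3: "\<bar>y2 - t\<bar> < e" using y2 unfolding dist_real_def by simp
      show ?thesis using a3 b unfolding abs_le_iff abs_less_iff by linarith
    qed
    then have "\<bar>t - (2 * real k + 1/2)\<bar> \<le> 1/2" by (rule field_le_epsilon)
    then have "2 * real k \<le> t" "t \<le> 2 * real k + 1" unfolding abs_le_iff by linarith+
    then show "t \<in> Tset K" using k(1) unfolding Tset_def by (auto intro!: bexI[where x=k])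
  qed
  then show ?thesis by (simp add: closure_subset_eq)
qed

lemma open_OTset: "open (OTset K)"
proof -
  have "OTset K = (\<Union>k\<in>K. {2 * real k <..< 2 * real k + 1})" unfolding OTset_def by auto
  then show ?thesis by auto
qed

definition slab :: "'n \<Rightarrow> nat set \<Rightarrow> (real^'n) set" where
  "slab i K = (\<lambda>x. x $ i) -` Tset K"

definition oslab :: "'n \<Rightarrow> nat set \<Rightarrow> (real^'n) set" where
  "oslab i K = (\<lambda>x. x $ i) -` OTset K"

lemma cont_nth: "continuous (at x) (\<lambda>x::real^'n. x $ i)"
  by (rule isCont_vec_nth[where f="\<lambda>x. x"]) simp

lemma closed_slab: "closed (slab i K)"
  unfolding slab_def by (intro continuous_closed_vimage closed_Tset cont_nth)

lemma open_oslab: "open (oslab i K)"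
  unfolding oslab_def by (intro continuous_open_vimage open_OTset cont_nth)

lemma OTset_sub: "OTset K \<subseteq> Tset K"
proof
  fix t assume "t \<in> OTset K"
  then obtain k where "k \<in> K" "2 * real k < t" "t < 2 * real k + 1" unfolding OTset_def by auto
  then show "t \<in> Tset K" unfolding Tset_def by (auto intro!: bexI[where x=k])
qed

lemma oslab_sub: "oslab i K \<subseteq> slab i K"
  unfolding oslab_def slab_def using OTset_sub by blast

lemma oslab_interior: "oslab i K \<subseteq> interior (slab i K)"
  by (intro interior_maximal oslab_sub open_oslab)

definition pt :: "nat \<Rightarrow> real^'n" where "pt k = (\<chi> j. 2 * real k + 1/2)"

lemma pt_in: "k \<in> K \<Longrightarrow> pt k \<in> oslab i K"
  unfolding pt_def oslab_def OTset_def by (auto intro!: bexI[where x=k])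

lemma slab_closure_oslab: "slab i K \<subseteq> closure (oslab i K)"
proof
  fix x assume "x \<in> slab i K"
  then obtain k where k: "k \<in> K" "2 * real k \<le> x $ i" "x $ i \<le> 2 * real k + 1"
    unfolding slab_def Tset_def by auto
  define t where "t = x $ i"
  define c where "c = 2 * real k + 1/2"
  have tc: "\<bar>t - c\<bar> \<le> 1/2" using k unfolding t_def c_def abs_le_iff by auto
  show "x \<in> closure (oslab i K)" unfolding closure_approachable
  proof (intro allI impI)
    fix e :: real assume e: "e > 0"
    define l where "l = min (1/2) e"
    have l: "0 < l" "l \<le> 1/2" "l \<le> e" using e unfolding l_def by auto
    define y where "y = x + (l * (c - t)) *\<^sub>R axis i 1"
    have yi: "y $ i = t + l * (c - t)" unfolding y_def t_def by (simp add: axis_def)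
    have "y $ i - c = (1 - l) * (t - c)" unfolding yi by (simp add: algebra_simps)
    then have "\<bar>y $ i - c\<bar> = (1 - l) * \<bar>t - c\<bar>" using l by (simp add: abs_mult)
    also have "\<dots> < 1/2"
    proof -
      have "(1 - l) * \<bar>t - c\<bar> \<le> (1 - l) * (1/2)" using tc l by (intro mult_left_mono) auto
      also have "\<dots> = (1 - l) / 2" by simp
      finally have "(1 - l) * \<bar>t - c\<bar> \<le> (1 - l) / 2" .
      moreover have "(1 - l) / 2 < 1 / 2" using l by simp
      ultimately show ?thesis by (rule le_less_trans)
    qed
    finally have "\<bar>y $ i - c\<bar> < 1/2" .
    then have "2 * real k < y $ i" "y $ i < 2 * real k + 1" unfolding c_def abs_less_iff by linarith+
    then have "y \<in> oslab i K" using k(1) unfolding oslab_def OTset_def by (auto intro!: bexI[where x=k])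
    moreover have "dist y x < e"
    proof -
      have "dist y x = norm ((l * (c - t)) *\<^sub>R axis i (1::real))" unfolding y_def by (simp add: dist_norm)
      also have "\<dots> = l * \<bar>c - t\<bar>" using l by (simp add: abs_mult)
      also have "\<dots> \<le> l * (1/2)" using tc l by (intro mult_left_mono) (auto simp: abs_minus_commute)
      also have "\<dots> < e" using l by linarith
      finally show ?thesis .
    qed
    ultimately show "\<exists>y\<in>oslab i K. dist y x < e" by blast
  qed
qed

lemma slab_regular: "closure (interior (slab i K)) = slab i K"
proof
  show "closure (interior (slab i K)) \<subseteq> slab i K"
    using closure_mono[OF interior_subset[of "slab i K"]] closed_slab closure_closed by metis
  show "slab i K \<subseteq> closure (interior (slab i K))"
    using slab_closure_oslab closure_mono[OF oslab_interior] by blast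
qed

lemma slab_ne: "K \<noteq> {} \<Longrightarrow> slab i K \<noteq> {}"
  using pt_in oslab_sub by blast

lemma slab_subset_iff: "slab i K \<subseteq> slab i L \<longleftrightarrow> K \<subseteq> L"
proof
  assume h: "slab i K \<subseteq> slab i L"
  show "K \<subseteq> L"
  proof
    fix k assume "k \<in> K"
    then have "pt k \<in> slab i L" using h pt_in oslab_sub by blast
    then obtain l where l: "l \<in> L" "2 * real l \<le> 2 * real k + 1/2" "2 * real k + 1/2 \<le> 2 * real l + 1"
      unfolding slab_def Tset_def pt_def by auto
    have "\<bar>2 * real k - 2 * real l\<bar> < 2" using l(2,3) unfolding abs_less_iff by auto
    then have "k = l" by (rule nat_close_eq)
    with l(1) show "k \<in> L" by simp
  qed
qed (auto simp: slab_def Tset_def)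

lemma slab_int_disj_iff: "interior (slab i K) \<inter> interior (slab i L) = {} \<longleftrightarrow> K \<inter> L = {}"
proof
  assume h: "interior (slab i K) \<inter> interior (slab i L) = {}"
  show "K \<inter> L = {}"
  proof (rule ccontr)
    assume "K \<inter> L \<noteq> {}"
    then obtain k where "k \<in> K" "k \<in> L" by blast
    then show False using h pt_in oslab_interior by blast
  qed
next
  assume h: "K \<inter> L = {}"
  have "slab i K \<inter> slab i L = {}"
  proof (rule ccontr)
    assume "slab i K \<inter> slab i L \<noteq> {}"
    then obtain x k l where "k \<in> K" "l \<in> L" "2 * real k \<le> x $ i" "x $ i \<le> 2 * real k + 1"
      "2 * real l \<le> x $ i" "x $ i \<le> 2 * real l + 1"
      unfolding slab_def Tset_def by auto
    then have "\<bar>2 * real k - 2 * real l\<bar> < 2 \<or> k = l" by linarith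
    then have "k = l" using nat_close_eq by blast
    then show False using h \<open>k\<in>K\<close> \<open>l\<in>L\<close> by blast
  qed
  then show "interior (slab i K) \<inter> interior (slab i L) = {}"
    using interior_subset by blast
qed


lemma reg_int_ne: "s \<in> regular_closed_regions X \<Longrightarrow> X interior_of s \<noteq> {}"
  unfolding regular_closed_regions_def by auto

lemma top_rel_ex: "\<exists>r. top_rel X r s t"
  by (metis top_rel.simps(2,3,4,5) subset_antisym top_rel.simps(1))

lemma top_rel_uniq:
  assumes "s \<in> regular_closed_regions X" "t \<in> regular_closed_regions X"
    "top_rel X r s t" "top_rel X r' s t"
  shows "r = r'"
proof -
  have a: "X interior_of s \<noteq> {}" "X interior_of t \<noteq> {}" using assms reg_int_ne by auto
  have m1: "s \<subseteq> t \<Longrightarrow> X interior_of s \<subseteq> X interior_of t" by (rule interior_of_mono)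
  have m2: "t \<subseteq> s \<Longrightarrow> X interior_of t \<subseteq> X interior_of s" by (rule interior_of_mono)
  show ?thesis using assms(3,4) a m1 m2 by (cases r; cases r') auto
qed

lemma top_rel_comp:
  assumes "s \<in> regular_closed_regions X" "t \<in> regular_closed_regions X" "u \<in> regular_closed_regions X"
    "top_rel X r s t" "top_rel X r' t u" "top_rel X r'' s u"
  shows "r'' \<in> comp5 r r'"
proof -
  define D where "D = (\<lambda>p q. X interior_of p \<inter> X interior_of q = {})"
  define Sb where "Sb = (\<lambda>p q. p \<subseteq> (q::'a set))"
  have tr: "top_rel X r p q = (case r of EQ \<Rightarrow> p = q | PO \<Rightarrow> \<not> D p q \<and> \<not> Sb p q \<and> \<not> Sb q p
     | DR \<Rightarrow> D p q | PP \<Rightarrow> Sb p q \<and> p \<noteq> q | PPI \<Rightarrow> Sb q p \<and> q \<noteq> p)" for r p q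
    by (cases r) (auto simp: D_def Sb_def)
  have F1: "Sb p q \<Longrightarrow> \<not> D p q" if "p \<in> {s,t,u}" for p q
    using reg_int_ne[of p X] that assms(1-3) interior_of_mono[of p q X] unfolding D_def Sb_def by blast
  have F2: "D p q \<Longrightarrow> Sb w q \<Longrightarrow> D p w" for p q w
    using interior_of_mono[of w q X] unfolding D_def Sb_def by blast
  have F3: "D p q \<Longrightarrow> D q p" for p q unfolding D_def by blast
  have T: "Sb p q \<Longrightarrow> Sb q w \<Longrightarrow> Sb p w" for p q w unfolding Sb_def by blast
  have A: "Sb p q \<Longrightarrow> Sb q p \<Longrightarrow> p = q" for p q unfolding Sb_def by blast
  have R: "Sb p p" for p unfolding Sb_def by blast
  have F1s: "\<And>q. Sb s q \<Longrightarrow> \<not> D s q" and F1t: "\<And>q. Sb t q \<Longrightarrow> \<not> D t q" and F1u: "\<And>q. Sb u q \<Longrightarrow> \<not> D u q"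
    using F1 by auto
  show ?thesis using assms(4-6) unfolding tr
    by (cases r; cases r'; cases r''; simp; metis F1s F1t F1u F2 F3 T A R)
qed

lemma top_rcc5:
  assumes "U \<subseteq> regular_closed_regions X" "U \<noteq> {}"
  shows "rcc5_structure U (top_rel X)"
  unfolding rcc5_structure_def
proof (intro conjI ballI allI impI)
  show "U \<noteq> {}" by fact
next
  fix x y assume "x \<in> U" "y \<in> U"
  then show "\<exists>!r. top_rel X r x y" using top_rel_ex top_rel_uniq assms(1) by blast
next
  fix x y assume "x \<in> U" "y \<in> U"
  show "top_rel X EQ x y = (x = y)" by simp
  show "top_rel X PO x y = top_rel X PO y x" by auto
  show "top_rel X DR x y = top_rel X DR y x" by auto
  show "top_rel X PP x y = top_rel X PPI y x" by auto
next
  fix x y z r s assume h: "x \<in> U" "y \<in> U" "z \<in> U" "top_rel X r x y \<and> top_rel X s y z"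
  obtain t where t: "top_rel X t x z" using top_rel_ex by blast
  then have "t \<in> comp5 r s" using h assms(1) top_rel_comp[of x X y z r s t] by blast
  with t show "\<exists>t\<in>comp5 r s. top_rel X t x z" by blast
qed

section \<open>Countable witness-closed substructures\<close>

definition wit :: "'w set \<Rightarrow> (rel5 \<Rightarrow> 'w \<Rightarrow> 'w \<Rightarrow> bool) \<Rightarrow> (nat \<Rightarrow> 'w set) \<Rightarrow> 'w \<Rightarrow> rel5 \<Rightarrow> fm \<Rightarrow> 'w" where
  "wit W R V u r \<psi> = (SOME y. y \<in> W \<and> R r u y \<and> \<not> sat W R V y \<psi>)"

primrec stage :: "'w set \<Rightarrow> (rel5 \<Rightarrow> 'w \<Rightarrow> 'w \<Rightarrow> bool) \<Rightarrow> (nat \<Rightarrow> 'w set) \<Rightarrow> 'w \<Rightarrow> nat \<Rightarrow> 'w set" where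
  "stage W R V x 0 = {x}"
| "stage W R V x (Suc k) = stage W R V x k \<union>
     (\<Union>u\<in>stage W R V x k. (\<lambda>(r,\<psi>). wit W R V u r \<psi>) ` {(r,\<psi>). \<exists>y\<in>W. R r u y \<and> \<not> sat W R V y \<psi>})"

lemma wit_prop: "\<exists>y\<in>W. R r u y \<and> \<not> sat W R V y \<psi> \<Longrightarrow>
  wit W R V u r \<psi> \<in> W \<and> R r u (wit W R V u r \<psi>) \<and> \<not> sat W R V (wit W R V u r \<psi>) \<psi>"
  unfolding wit_def by (rule someI_ex) blast

lemma stage_sub: "x \<in> W \<Longrightarrow> stage W R V x k \<subseteq> W"
  by (induction k) (auto intro: wit_prop[THEN conjunct1])

lemma stage_countable: "countable (stage W R V x k)"
proof (induction k)
  case 0 then show ?case by simp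
next
  case (Suc k)
  have "countable ((\<lambda>(r,\<psi>). wit W R V u r \<psi>) ` {(r,\<psi>). \<exists>y\<in>W. R r u y \<and> \<not> sat W R V y \<psi>})" for u
    by (intro countable_image) (rule countableI_type)
  then show ?case using Suc by auto
qed

definition Ucl where "Ucl W R V x = (\<Union>k. stage W R V x k)"

lemma Ucl_props:
  assumes "x \<in> W"
  shows "Ucl W R V x \<subseteq> W" "countable (Ucl W R V x)" "x \<in> Ucl W R V x"
    "\<And>u r \<psi>. u \<in> Ucl W R V x \<Longrightarrow> \<exists>y\<in>W. R r u y \<and> \<not> sat W R V y \<psi> \<Longrightarrow>
        \<exists>y\<in>Ucl W R V x. R r u y \<and> \<not> sat W R V y \<psi>"
proof -
  show "Ucl W R V x \<subseteq> W" unfolding Ucl_def UN_subset_iff using stage_sub[OF assms] by simp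
  show "countable (Ucl W R V x)" unfolding Ucl_def by (intro countable_UN countableI_type stage_countable)
  have "x \<in> stage W R V x 0" by simp
  then show "x \<in> Ucl W R V x" unfolding Ucl_def by (rule UN_I[OF UNIV_I])
  fix u r \<psi> assume u: "u \<in> Ucl W R V x" and e: "\<exists>y\<in>W. R r u y \<and> \<not> sat W R V y \<psi>"
  then obtain k where k: "u \<in> stage W R V x k" unfolding Ucl_def by blast
  have "wit W R V u r \<psi> \<in> (\<lambda>(r,\<psi>). wit W R V u r \<psi>) ` {(r,\<psi>). \<exists>y\<in>W. R r u y \<and> \<not> sat W R V y \<psi>}"
    using e by (intro image_eqI[where x="(r,\<psi>)"]) auto
  then have "wit W R V u r \<psi> \<in> stage W R V x (Suc k)" unfolding stage.simps(2) by (rule UnI2[OF UN_I[OF k]])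
  then have "wit W R V u r \<psi> \<in> Ucl W R V x" unfolding Ucl_def by (rule UN_I[OF UNIV_I])
  then show "\<exists>y\<in>Ucl W R V x. R r u y \<and> \<not> sat W R V y \<psi>"
    using wit_prop[OF e] by blast
qed

lemma sub_truth:
  assumes "U \<subseteq> W"
    and cl: "\<And>u r \<psi>. u \<in> U \<Longrightarrow> \<exists>y\<in>W. R r u y \<and> \<not> sat W R V y \<psi> \<Longrightarrow> \<exists>y\<in>U. R r u y \<and> \<not> sat W R V y \<psi>"
  shows "u \<in> U \<Longrightarrow> sat U R V u \<psi> = sat W R V u \<psi>"
proof (induction \<psi> arbitrary: u)
  case (Box r \<psi>)
  show ?case
  proof
    assume "sat U R V u (Box r \<psi>)"
    then have h: "\<forall>y\<in>U. R r u y \<longrightarrow> sat W R V y \<psi>" using Box.IH by auto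
    show "sat W R V u (Box r \<psi>)" using cl[OF Box.prems, of r \<psi>] h by auto
  next
    assume "sat W R V u (Box r \<psi>)"
    then show "sat U R V u (Box r \<psi>)" using Box.IH assms(1) by auto
  qed
qed auto

lemma transfer:
  assumes inj: "inj_on f W" and rel: "\<And>x y r. x \<in> W \<Longrightarrow> y \<in> W \<Longrightarrow> R r x y = S r (f x) (f y)"
  shows "x \<in> W \<Longrightarrow> sat W R V x \<phi> = sat (f ` W) S (\<lambda>p. f ` (V p \<inter> W)) (f x) \<phi>"
proof (induction \<phi> arbitrary: x)
  case (Var p)
  then show ?case using inj by (auto simp: inj_on_image_mem_iff)
next
  case (Box r \<phi>)
  then show ?case using rel by auto
qed auto

lemma transfer_valid:
  assumes "inj_on f W" "\<And>x y r. x \<in> W \<Longrightarrow> y \<in> W \<Longrightarrow> R r x y = S r (f x) (f y)"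
    and "valid_in (f ` W) S \<phi>"
  shows "valid_in W R \<phi>"
  using assms(3) transfer[where f=f and W=W and R=R and S=S, OF assms(1,2)] unfolding valid_in_def by blast

section \<open>Embedding into R^n\<close>

lemma embed:
  fixes W :: "'w set" and i :: "'n::finite"
  assumes S: "rcc5_structure W R" and C: "countable W"
  shows "\<exists>f :: 'w \<Rightarrow> (real^'n) set. inj_on f W \<and> f ` W \<subseteq> regular_closed_regions euclidean \<and>
     (\<forall>x\<in>W. \<forall>y\<in>W. \<forall>r. R r x y = top_rel euclidean r (f x) (f y))"
proof -
  define A where "A = Inl ` W \<union> Inr ` (W \<times> W)"
  have cA: "countable A" unfolding A_def using C by auto
  define h where "h = to_nat_on A"
  have ih: "inj_on h A" unfolding h_def using cA by auto
  define f where "f x = slab i (h ` Fa W R x)" for x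
  have FA: "Fa W R x \<subseteq> A" for x unfolding A_def by (rule Fa_sub)
  have sub: "f x \<subseteq> f y \<longleftrightarrow> (x = y \<or> R PP x y)" if "x \<in> W" "y \<in> W" for x y
    unfolding f_def slab_subset_iff inj_on_image_subset_iff[OF ih FA FA] using Fa_le_iff[OF S that] .
  have disj: "interior (f x) \<inter> interior (f y) = {} \<longleftrightarrow> R DR x y" if "x \<in> W" "y \<in> W" for x y
    unfolding f_def slab_int_disj_iff inj_on_image_Int[OF ih FA FA, symmetric]
    using Fa_disj_iff[OF S that] by simp
  have anti: "\<not> (R PP x y \<and> R PP y x)" if "x \<in> W" "y \<in> W" for x y
    using rcc_pp[OF S that(2,1)] rcc_uniq[OF S that, of PP PPI] by auto
  have irr: "\<not> R PP x x" if "x \<in> W" for x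
    using rcc_eq[OF S that that] rcc_uniq[OF S that that, of EQ PP] by auto
  have eqf: "f x = f y \<longleftrightarrow> x = y" if "x \<in> W" "y \<in> W" for x y
    using sub[OF that] sub[OF that(2,1)] anti[OF that] by blast
  have rel: "R r x y = top_rel euclidean r (f x) (f y)" if xy: "x \<in> W" "y \<in> W" for x y r
  proof (cases r)
    case DR then show ?thesis using disj[OF xy] by simp
  next
    case EQ then show ?thesis using eqf[OF xy] rcc_eq[OF S xy] by simp
  next
    case PP then show ?thesis using sub[OF xy] eqf[OF xy] irr[OF xy(1)] by auto
  next
    case PPI then show ?thesis using sub[OF xy(2,1)] eqf[OF xy(2,1)] irr[OF xy(1)] rcc_pp[OF S xy(2,1)] by auto
  next
    case PO
    obtain r' where r': "R r' x y" using rcc_ex[OF S xy] by blast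
    have u: "R r'' x y \<Longrightarrow> r'' = r'" for r'' using rcc_uniq[OF S xy _ r'] .
    have "R PO x y \<longleftrightarrow> \<not> R DR x y \<and> \<not> (x = y \<or> R PP x y) \<and> \<not> (y = x \<or> R PP y x)"
      using u r' rcc_eq[OF S xy] rcc_pp[OF S xy(2,1)] by (cases r') auto
    then show ?thesis using PO disj[OF xy] sub[OF xy] sub[OF xy(2,1)] by auto
  qed
  have inj: "inj_on f W" using eqf by (auto intro: inj_onI)
  have reg: "f x \<in> regular_closed_regions euclidean" if "x \<in> W" for x
  proof -
    have "h ` Fa W R x \<noteq> {}" using Fa_ne[OF that] by blast
    then have "slab i (h ` Fa W R x) \<noteq> {}" by (rule slab_ne)
    then show ?thesis unfolding regular_closed_regions_def f_def by (simp add: slab_regular)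
  qed
  show ?thesis using inj reg rel by blast
qed


lemma LS_sub_RS5:
  assumes phi: "\<phi> \<in> LS_space (euclidean :: (real^'n::finite) topology)"
  shows "\<phi> \<in> L_RS5 TYPE('w)"
proof -
  have H0: "\<forall>U. U \<subseteq> regular_closed_regions (euclidean :: (real^'n) topology) \<and> U \<noteq> {} \<longrightarrow> valid_in U (top_rel euclidean) \<phi>"
    using phi by (simp add: LS_space_def)
  have "valid_in W R \<phi>" if S: "rcc5_structure W R" for W :: "'w set" and R
    unfolding valid_in_def
  proof (intro allI ballI)
    fix V x assume x: "x \<in> W"
    define U where "U = Ucl W R V x"
    note P = Ucl_props[OF x, where R=R and V=V, folded U_def]
    have SU: "rcc5_structure U R" using rcc_sub[OF S P(1)] P(3) by blast
    obtain f :: "'w \<Rightarrow> (real^'n) set" where f: "inj_on f U" "f ` U \<subseteq> regular_closed_regions euclidean"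
      "\<forall>x\<in>U. \<forall>y\<in>U. \<forall>r. R r x y = top_rel euclidean r (f x) (f y)"
      using embed[OF SU P(2)] by (elim exE conjE) (rule that)
    have ne: "f ` U \<noteq> {}" using P(3) by blast
    have H: "valid_in (f ` U) (top_rel euclidean) \<phi>" by (rule H0[rule_format, OF conjI[OF f(2) ne]])
    have rl: "\<And>x y r. x \<in> U \<Longrightarrow> y \<in> U \<Longrightarrow> R r x y = top_rel euclidean r (f x) (f y)" using f(3) by blast
    have "valid_in U R \<phi>" by (rule transfer_valid[OF f(1) rl H])
    then have "sat U R V x \<phi>" using P(3) unfolding valid_in_def by blast
    then show "sat W R V x \<phi>" using sub_truth[OF P(1) P(4) P(3)] by simp
  qed
  then show ?thesis unfolding L_RS5_def by simp
qed

lemma Lfin_sub_RS5: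
  assumes phi: "\<phi> \<in> Lfin_space (euclidean :: (real^'n::finite) topology)"
  shows "\<phi> \<in> Lfin_RS5 TYPE('w)"
proof -
  have H0: "\<forall>U. U \<subseteq> regular_closed_regions (euclidean :: (real^'n) topology) \<and> U \<noteq> {} \<and> finite U \<longrightarrow> valid_in U (top_rel euclidean) \<phi>"
    using phi by (simp add: Lfin_space_def)
  have "valid_in U R \<phi>" if S: "rcc5_structure W R" and h: "U \<subseteq> W" "U \<noteq> {}" "finite U" for W :: "'w set" and R U
  proof -
    have SU: "rcc5_structure U R" using rcc_sub[OF S h(1,2)] .
    obtain f :: "'w \<Rightarrow> (real^'n) set" where f: "inj_on f U" "f ` U \<subseteq> regular_closed_regions euclidean"
      "\<forall>x\<in>U. \<forall>y\<in>U. \<forall>r. R r x y = top_rel euclidean r (f x) (f y)"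
      using embed[OF SU countable_finite[OF h(3)]] by (elim exE conjE) (rule that)
    have ne: "f ` U \<noteq> {}" using h(2) by blast
    have fin: "finite (f ` U)" using h(3) by (rule finite_imageI)
    have H: "valid_in (f ` U) (top_rel euclidean) \<phi>" by (rule H0[rule_format, OF conjI[OF f(2) conjI[OF ne fin]]])
    have rl: "\<And>x y r. x \<in> U \<Longrightarrow> y \<in> U \<Longrightarrow> R r x y = top_rel euclidean r (f x) (f y)" using f(3) by blast
    show "valid_in U R \<phi>" by (rule transfer_valid[OF f(1) rl H])
  qed
  then show ?thesis unfolding Lfin_RS5_def by blast
qed

lemma RS5_sub_LS:
  fixes X :: "'a topology"
  assumes "\<phi> \<in> L_RS5 TYPE('a set)"
  shows "\<phi> \<in> LS_space X"
proof -
  have H0: "\<forall>(W::'a set set) R. rcc5_structure W R \<longrightarrow> valid_in W R \<phi>" using assms by (simp add: L_RS5_def)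
  have "valid_in U (top_rel X) \<phi>" if "U \<subseteq> regular_closed_regions X" "U \<noteq> {}" for U
    using H0 top_rcc5[OF that] by simp
  then show ?thesis unfolding LS_space_def by simp
qed

lemma RS5fin_sub_Lfin:
  fixes X :: "'a topology"
  assumes "\<phi> \<in> Lfin_RS5 TYPE('a set)"
  shows "\<phi> \<in> Lfin_space X"
proof -
  have H0: "\<forall>(W::'a set set) R U. rcc5_structure W R \<and> U \<subseteq> W \<and> U \<noteq> {} \<and> finite U \<longrightarrow> valid_in U R \<phi>"
    using assms by (simp add: Lfin_RS5_def)
  have "valid_in U (top_rel X) \<phi>" if "U \<subseteq> regular_closed_regions X" "U \<noteq> {}" "finite U" for U
    using H0[rule_format, OF conjI[OF top_rcc5[OF that(1,2)] conjI[OF subset_refl conjI[OF that(2,3)]]]] .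
  then show ?thesis unfolding Lfin_space_def by simp
qed

lemma LS_TOP_iff: "\<phi> \<in> LS_TOP TYPE('a) \<longleftrightarrow> (\<forall>X::'a topology. \<phi> \<in> LS_space X)"
  unfolding LS_TOP_def by simp

lemma Lfin_TOP_iff: "\<phi> \<in> Lfin_TOP TYPE('a) \<longleftrightarrow> (\<forall>X::'a topology. \<phi> \<in> Lfin_space X)"
  unfolding Lfin_TOP_def by simp

theorem theorem8p2:
  fixes n :: nat
  assumes "CARD('n::finite) = n" and "n > 0"
  shows
    \<comment> \<open>(1)\<close>
    "(LS_space (euclidean :: (real^'n) topology) \<subseteq> L_RS5 TYPE('w) \<and>
    LS_space (euclidean :: (real^'n) topology) \<subseteq> LS_TOP TYPE('a) \<and>
    L_RS5 TYPE((real^'n) set) = LS_space (euclidean :: (real^'n) topology) \<and>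
    LS_TOP TYPE(real^'n) = LS_space (euclidean :: (real^'n) topology) \<and>
    \<comment> \<open>(2)\<close>
    Lfin_space (euclidean :: (real^'n) topology) \<subseteq> Lfin_RS5 TYPE('w) \<and>
    Lfin_space (euclidean :: (real^'n) topology) \<subseteq> Lfin_TOP TYPE('a) \<and>
    Lfin_RS5 TYPE((real^'n) set) = Lfin_space (euclidean :: (real^'n) topology) \<and>
    Lfin_TOP TYPE(real^'n) = Lfin_space (euclidean :: (real^'n) topology))"
proof -
  have a2: "LS_space (euclidean :: (real^'n) topology) \<subseteq> LS_TOP TYPE('b)" for b :: "'b itself"
  proof
    fix \<phi> assume "\<phi> \<in> LS_space (euclidean :: (real^'n) topology)"
    then have "\<phi> \<in> L_RS5 TYPE('b set)" by (rule LS_sub_RS5)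
    then show "\<phi> \<in> LS_TOP TYPE('b)" unfolding LS_TOP_iff using RS5_sub_LS by blast
  qed
  have b2: "Lfin_space (euclidean :: (real^'n) topology) \<subseteq> Lfin_TOP TYPE('b)" for b :: "'b itself"
  proof
    fix \<phi> assume "\<phi> \<in> Lfin_space (euclidean :: (real^'n) topology)"
    then have "\<phi> \<in> Lfin_RS5 TYPE('b set)" by (rule Lfin_sub_RS5)
    then show "\<phi> \<in> Lfin_TOP TYPE('b)" unfolding Lfin_TOP_iff using RS5fin_sub_Lfin by blast
  qed
  have a1: "LS_space (euclidean :: (real^'n) topology) \<subseteq> L_RS5 TYPE('w)"
    using LS_sub_RS5 by (rule subsetI)
  have a3: "L_RS5 TYPE((real^'n) set) = LS_space (euclidean :: (real^'n) topology)"
    using LS_sub_RS5 RS5_sub_LS by (intro subset_antisym subsetI)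
  have a4: "LS_TOP TYPE(real^'n) = LS_space (euclidean :: (real^'n) topology)"
  proof (intro subset_antisym)
    show "LS_TOP TYPE(real^'n) \<subseteq> LS_space (euclidean :: (real^'n) topology)"
      by (intro subsetI) (simp add: LS_TOP_iff)
  qed (rule a2)
  have b1: "Lfin_space (euclidean :: (real^'n) topology) \<subseteq> Lfin_RS5 TYPE('w)"
    using Lfin_sub_RS5 by (rule subsetI)
  have b3: "Lfin_RS5 TYPE((real^'n) set) = Lfin_space (euclidean :: (real^'n) topology)"
    using Lfin_sub_RS5 RS5fin_sub_Lfin by (intro subset_antisym subsetI)
  have b4: "Lfin_TOP TYPE(real^'n) = Lfin_space (euclidean :: (real^'n) topology)"
  proof (intro subset_antisym)
    show "Lfin_TOP TYPE(real^'n) \<subseteq> Lfin_space (euclidean :: (real^'n) topology)"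
      by (intro subsetI) (simp add: Lfin_TOP_iff)
  qed (rule b2)
  show ?thesis using a1 a2 a3 a4 b1 b2 b3 b4 by (intro conjI)
qed

end
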